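(* For every integer $q\equiv 4\pmod 6$ there exists a $q$-ary $3$-frameproof code of length $5$ and cardinality $\frac{5}{3}(q-1)^2+1$.
   Context: For $P\subseteq F^l$ over a finite alphabet $F$, $desc(P)=\{x\in F^l: \text{for every } i\in\{1,\ldots,l\} \text{ there is } y\in P \text{ with } x_i=y_i\}$. For an integer $c\geq 2$, a $c$-frameproof code of length $l$ is a subset $C\subseteq F^l$ with $desc(P)\cap C=P$ for every $P\subseteq C$ with $|P|\leq c$; it is $q$-ary if $|F|=q$. *)

theory Defs
  imports Complex_Main
begin

definition words :: "'a set \<Rightarrow> nat \<Rightarrow> 'a list set" where
  "words F l = {x. length x = l \<and> set x \<subseteq> F}"

definition desc :: "'a set \<Rightarrow> nat \<Rightarrow> 'a list set \<Rightarrow> 'a list set" where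
  "desc F l P = {x \<in> words F l. \<forall>i<l. \<exists>y\<in>P. x ! i = y ! i}"

definition frameproof :: "nat \<Rightarrow> 'a set \<Rightarrow> nat \<Rightarrow> 'a list set \<Rightarrow> bool" where
  "frameproof c F l C \<longleftrightarrow> C \<subseteq> words F l \<and>
     (\<forall>P. P \<subseteq> C \<and> card P \<le> c \<longrightarrow> desc F l P \<inter> C = P)"

end

theory Submission
  imports Defs "HOL-Number_Theory.Cong"
begin

definition ff :: "nat \<Rightarrow> nat" where "ff k = (if k = 2 \<or> k = 3 then 1 else 0)"
definition rel :: "nat \<Rightarrow> nat \<Rightarrow> nat" where "rel s p = (p + 5 - s) mod 5"
definition form :: "nat \<Rightarrow> int \<Rightarrow> int \<Rightarrow> int" where
  "form k a b = (if k = 1 then a else if k = 2 then b else if k = 3 then a + b else a - b)"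
definition sym :: "nat \<Rightarrow> nat \<Rightarrow> nat \<Rightarrow> nat \<Rightarrow> nat \<Rightarrow> nat \<Rightarrow> nat" where
  "sym m s a b g p = 3 * nat (form (rel s p) (int a) (int b) mod int m) + (g + ff (rel s p)) mod 3"
definition cw :: "nat \<Rightarrow> nat \<Rightarrow> nat \<Rightarrow> nat \<Rightarrow> nat \<Rightarrow> nat list" where
  "cw m s a b g = map (\<lambda>p. if p = s then 3*m else sym m s a b g p) [0..<5]"
definition code :: "nat \<Rightarrow> nat list set" where
  "code m = insert (replicate 5 (3*m)) ((\<lambda>(s,a,b,g). cw m s a b g) ` ({..<5} \<times> {..<m} \<times> {..<m} \<times> {..<3}))"

lemma cw_len[simp]: "length (cw m s a b g) = 5"
  by (simp add: cw_def)

lemma cw_nth: "p < 5 \<Longrightarrow> cw m s a b g ! p = (if p = s then 3*m else sym m s a b g p)"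
  by (simp add: cw_def)

lemma sym_lt: "m > 0 \<Longrightarrow> sym m s a b g p < 3*m"
proof -
  assume m: "m > 0"
  have "nat (form (rel s p) (int a) (int b) mod int m) < m"
    using m by (simp add: nat_less_iff)
  moreover have "(g + ff (rel s p)) mod 3 < 3" by simp
  ultimately show ?thesis unfolding sym_def by linarith
qed

lemma cw_inf: "m > 0 \<Longrightarrow> p < 5 \<Longrightarrow> cw m s a b g ! p = 3*m \<longleftrightarrow> p = s"
  using sym_lt[of m s a b g p] by (simp add: cw_nth)

lemma mcancel: "((x::nat) + k) mod 3 = (y + k) mod 3 \<Longrightarrow> x mod 3 = y mod 3"
  using cong_add_rcancel_nat[where x=x and a=k and y=y and n=3] unfolding cong_def by blast
lemma mod3_lemma: "((g::nat) + a) mod 3 = (g' + b) mod 3 \<Longrightarrow> (g + c) mod 3 = (g' + d) mod 3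
   \<Longrightarrow> (a + d) mod 3 = (b + c) mod 3"
proof -
  assume h1: "(g + a) mod 3 = (g' + b) mod 3" and h2: "(g + c) mod 3 = (g' + d) mod 3"
  have "((a + d) + (g + g')) mod 3 = ((g + a) + (g' + d)) mod 3" by (simp add: algebra_simps)
  also have "\<dots> = ((g + a) mod 3 + (g' + d) mod 3) mod 3" by (simp add: mod_add_eq)
  also have "\<dots> = ((g' + b) mod 3 + (g + c) mod 3) mod 3" using h1 h2 by simp
  also have "\<dots> = ((b + c) + (g + g')) mod 3" by (simp add: mod_add_eq algebra_simps)
  finally show ?thesis by (rule mcancel)
qed
lemma mod3_cancel: "((g::nat) + c) mod 3 = (g' + c) mod 3 \<Longrightarrow> g < 3 \<Longrightarrow> g' < 3 \<Longrightarrow> g = g'"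
  by (drule mcancel) simp

lemma five_cases: "(s::nat) < 5 \<Longrightarrow> s = 0 \<or> s = 1 \<or> s = 2 \<or> s = 3 \<or> s = 4"
  by auto
lemma rel_range: "p < 5 \<Longrightarrow> s < 5 \<Longrightarrow> p \<noteq> s \<Longrightarrow> rel s p \<in> {1,2,3,4}"
  using five_cases[of p] five_cases[of s] unfolding rel_def by auto
lemma rel_inj: "i < 5 \<Longrightarrow> j < 5 \<Longrightarrow> s < 5 \<Longrightarrow> i \<noteq> j \<Longrightarrow> rel s i \<noteq> rel s j"
  using five_cases[of i] five_cases[of j] five_cases[of s] unfolding rel_def by auto
lemma finite_check:
  assumes "s < 5" "t < 5" "i < 5" "j < 5" "s \<noteq> t" "i \<noteq> j" "i \<noteq> s" "i \<noteq> t" "j \<noteq> s" "j \<noteq> t"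
  shows "(ff (rel s i) + ff (rel t j)) mod 3 \<noteq> (ff (rel t i) + ff (rel s j)) mod 3"
  using five_cases[OF assms(1)] five_cases[OF assms(2)] five_cases[OF assms(3)] five_cases[OF assms(4)] assms(5-)
  by (elim disjE) (simp_all add: ff_def rel_def)
lemma decode: "(3::nat)*u + v = 3*u' + v' \<Longrightarrow> v < 3 \<Longrightarrow> v' < 3 \<Longrightarrow> u = u' \<and> v = v'"
  by presburger
lemma form_diff: "form k a b - form k a' b' = form k (a - a') (b - b')"
  by (simp add: form_def)

lemma gen0:
  fixes m x y :: int
  assumes odd: "odd m" and d: "m dvd form k x y" "m dvd form k' x y" and k: "k \<in> {1,2,3,4}" "k' \<in> {1,2,3,4}" "k < k'"
  shows "m dvd x \<and> m dvd y"
proof -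
  have cop: "coprime 2 m" using odd by simp
  consider "k = 1" "k' = 2" | "k = 1" "k' = 3" | "k = 1" "k' = 4" | "k = 2" "k' = 3" | "k = 2" "k' = 4" | "k = 3" "k' = 4"
    using k by auto
  then show ?thesis
  proof cases
    case 1 then show ?thesis using d by (simp add: form_def)
  next
    case 2 then have "m dvd x" "m dvd x + y" using d by (simp_all add: form_def)
    then show ?thesis using dvd_diff[of m "x + y" x] by simp
  next
    case 3 then have "m dvd x" "m dvd x - y" using d by (simp_all add: form_def)
    then show ?thesis using dvd_diff[of m x "x - y"] by simp
  next
    case 4 then have "m dvd y" "m dvd x + y" using d by (simp_all add: form_def)
    then show ?thesis using dvd_diff[of m "x + y" y] by simp
  next
    case 5 then have "m dvd y" "m dvd x - y" using d by (simp_all add: form_def)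
    then show ?thesis using dvd_add[of m "x - y" y] by simp
  next
    case 6 then have a1: "m dvd x + y" "m dvd x - y" using d by (simp_all add: form_def)
    have "(x + y) + (x - y) = 2 * x" by simp
    then have "m dvd 2 * x" using dvd_add[OF a1] by simp
    then have "m dvd x" using cop by (simp add: coprime_dvd_mult_right_iff)
    then show ?thesis using a1 dvd_diff[of m "x + y" x] by simp
  qed
qed

lemma form_lemma:
  fixes m :: int
  assumes odd: "odd m" and k: "k \<in> {1,2,3,4}" "k' \<in> {1,2,3,4}" "k \<noteq> k'"
    and e1: "form k a b mod m = form k a' b' mod m" and e2: "form k' a b mod m = form k' a' b' mod m"
  shows "a mod m = a' mod m \<and> b mod m = b' mod m"
proof -
  have d1: "m dvd form k (a - a') (b - b')" using e1 form_diff[of k a b a' b']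
    by (simp only: mod_eq_dvd_iff)
  have d2: "m dvd form k' (a - a') (b - b')" using e2 form_diff[of k' a b a' b']
    by (simp only: mod_eq_dvd_iff)
  have "m dvd (a - a') \<and> m dvd (b - b')"
  proof (cases "k < k'")
    case True then show ?thesis using gen0[OF odd d1 d2 k(1,2)] by simp
  next
    case False then have "k' < k" using k(3) by simp
    then show ?thesis using gen0[OF odd d2 d1 k(2,1)] by simp
  qed
  then show ?thesis by (simp only: mod_eq_dvd_iff)
qed


lemma code_cases:
  assumes "x \<in> code m" "x \<noteq> replicate 5 (3*m)"
  obtains s a b g where "x = cw m s a b g" "s < 5" "a < m" "b < m" "g < 3"
proof -
  from assms have "x \<in> (\<lambda>(s,a,b,g). cw m s a b g) ` ({..<5} \<times> {..<m} \<times> {..<m} \<times> {..<3})"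
    unfolding code_def by blast
  then obtain u where u: "u \<in> {..<5::nat} \<times> {..<m} \<times> {..<m} \<times> {..<3::nat}" "x = (\<lambda>(s,a,b,g). cw m s a b g) u"
    by blast
  obtain s a b g where uu: "u = (s,a,b,g)" by (cases u) auto
  have "x = cw m s a b g" using u(2) uu by simp
  moreover have "s < 5" "a < m" "b < m" "g < 3" using u(1) uu by auto
  ultimately show ?thesis by (rule that)
qed

lemma KL:
  assumes m: "odd m" and st: "s < 5" "a < m" "b < m" "g < 3" "t < 5" "a' < m" "b' < m" "g' < 3"
    and ne: "(s,a,b,g) \<noteq> (t,a',b',g')"
    and ij: "i < 5" "j < 5" "i \<noteq> j" "i \<noteq> s" "j \<noteq> s"
    and ei: "cw m s a b g ! i = cw m t a' b' g' ! i" and ej: "cw m s a b g ! j = cw m t a' b' g' ! j"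
  shows False
proof -
  have m0: "m > 0" using m by (cases m) auto
  have it: "i \<noteq> t" using ei cw_inf[OF m0 ij(1), of s a b g] cw_inf[OF m0 ij(1), of t a' b' g'] ij(4) by auto
  have jt: "j \<noteq> t" using ej cw_inf[OF m0 ij(2), of s a b g] cw_inf[OF m0 ij(2), of t a' b' g'] ij(5) by auto
  have si: "sym m s a b g i = sym m t a' b' g' i" using ei it ij by (simp add: cw_nth)
  have sj: "sym m s a b g j = sym m t a' b' g' j" using ej jt ij by (simp add: cw_nth)
  have dec: "form (rel s p) (int a) (int b) mod int m = form (rel t p) (int a') (int b') mod int m
      \<and> (g + ff (rel s p)) mod 3 = (g' + ff (rel t p)) mod 3"
    if "sym m s a b g p = sym m t a' b' g' p" for p
  proof -
    from decode[OF that[unfolded sym_def]]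
    have "nat (form (rel s p) (int a) (int b) mod int m) = nat (form (rel t p) (int a') (int b') mod int m)"
      "(g + ff (rel s p)) mod 3 = (g' + ff (rel t p)) mod 3" by auto
    moreover have "0 \<le> form (rel s p) (int a) (int b) mod int m" "0 \<le> form (rel t p) (int a') (int b') mod int m"
      using m0 by simp_all
    ultimately show ?thesis by (simp add: eq_nat_nat_iff)
  qed
  note di = dec[OF si] and dj = dec[OF sj]
  show False
  proof (cases "s = t")
    case True
    note di' = di[unfolded True[symmetric]] and dj' = dj[unfolded True[symmetric]]
    have "(g + ff (rel s i)) mod 3 = (g' + ff (rel s i)) mod 3" by (rule conjunct2[OF di'])
    then have gg: "g = g'" using st(4,8) mod3_cancel by blast
    note ri = rel_range[OF ij(1) st(1) ij(4)] rel_range[OF ij(2) st(1) ij(5)] rel_inj[OF ij(1,2) st(1) ij(3)]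
    have oddm: "odd (int m)" using m by simp
    have e1: "form (rel s i) (int a) (int b) mod int m = form (rel s i) (int a') (int b') mod int m"
      by (rule conjunct1[OF di'])
    have e2: "form (rel s j) (int a) (int b) mod int m = form (rel s j) (int a') (int b') mod int m"
      by (rule conjunct1[OF dj'])
    have r: "int a mod int m = int a' mod int m \<and> int b mod int m = int b' mod int m"
      using form_lemma[OF oddm ri e1 e2] .
    have "int a mod int m = int a" "int a' mod int m = int a'" "int b mod int m = int b" "int b' mod int m = int b'"
      using st by simp_all
    then have "int a = int a'" "int b = int b'" using conjunct1[OF r] conjunct2[OF r] by linarith+
    then have "a = a'" "b = b'" by simp_all
    then show False using ne True gg by simp
  next
    case False
    have "(ff (rel s i) + ff (rel t j)) mod 3 = (ff (rel t i) + ff (rel s j)) mod 3"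
      by (rule mod3_lemma[OF conjunct2[OF di] conjunct2[OF dj]])
    with finite_check[OF st(1) st(5) ij(1,2) False ij(3,4) it ij(5) jt] show False by (rule notE)
  qed
qed

lemma key:
  assumes m: "odd m" and x: "x \<in> code m"
  shows "\<exists>s<5. \<forall>y\<in>code m. y \<noteq> x \<longrightarrow> (\<forall>i j. i < 5 \<longrightarrow> j < 5 \<longrightarrow> i \<noteq> j \<longrightarrow> i \<noteq> s \<longrightarrow> j \<noteq> s
      \<longrightarrow> x ! i = y ! i \<longrightarrow> x ! j = y ! j \<longrightarrow> False)"
proof -
  have m0: "m > 0" using m by (cases m) auto
  show ?thesis
  proof (cases "x = replicate 5 (3*m)")
    case True
    show ?thesis
    proof (intro exI[of _ 0] conjI ballI impI allI)
      fix y i j assume y: "y \<in> code m" "y \<noteq> x" and ij: "i < 5" "j < 5" "i \<noteq> j" "x ! i = y ! i" "x ! j = y ! j"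
      from y True obtain t a b g where yy: "y = cw m t a b g" by (metis code_cases)
      have "i = t" "j = t" using ij True cw_inf[OF m0, of i t a b g] cw_inf[OF m0, of j t a b g] yy by auto
      then show False using ij by simp
    qed simp
  next
    case False
    obtain s a b g where xx: "x = cw m s a b g" and p: "s < 5" "a < m" "b < m" "g < 3"
      by (rule code_cases[OF x False])
    show ?thesis
    proof (intro exI[of _ s] conjI ballI impI allI)
      fix y i j assume y: "y \<in> code m" "y \<noteq> x" and ij: "i < 5" "j < 5" "i \<noteq> j" "i \<noteq> s" "j \<noteq> s"
        "x ! i = y ! i" "x ! j = y ! j"
      show False
      proof (cases "y = replicate 5 (3*m)")
        case True
        then show False using ij xx cw_inf[OF m0, of i s a b g] by auto
      next
        case False
        obtain t a' b' g' where yy: "y = cw m t a' b' g'" and q: "t < 5" "a' < m" "b' < m" "g' < 3"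
          by (rule code_cases[OF y(1) False])
        have ne: "(s,a,b,g) \<noteq> (t,a',b',g')" using y(2) xx yy by auto
        show False using KL[OF m p q ne ij(1-5)] ij(6,7) unfolding xx yy by blast
      qed
    qed (use p in simp)
  qed
qed

lemma code_card:
  assumes m: "odd m"
  shows "card (code m) = 15 * m * m + 1"
proof -
  have m0: "m > 0" using m by (cases m) auto
  let ?D = "{..<5::nat} \<times> {..<m} \<times> {..<m} \<times> {..<3::nat}"
  let ?f = "\<lambda>(s,a,b,g). cw m s a b g"
  have inj: "inj_on ?f ?D"
  proof (rule inj_onI)
    fix u v assume d: "u \<in> ?D" "v \<in> ?D" and e0: "?f u = ?f v"
    obtain s a b g where u: "u = (s,a,b,g)" by (cases u) auto
    obtain t a' b' g' where v: "v = (t,a',b',g')" by (cases v) auto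
    have e: "cw m s a b g = cw m t a' b' g'" using e0 u v by simp
    show "u = v"
    proof (rule ccontr)
      assume "u \<noteq> v"
      then have ne: "(s,a,b,g) \<noteq> (t,a',b',g')" using u v by simp
      have s5: "s < 5" using d u by simp
      have pp: "(s+1) mod 5 \<noteq> (s+2) mod 5" "(s+1) mod 5 \<noteq> s" "(s+2) mod 5 \<noteq> s" using s5 by presburger+
      have dd: "s < 5" "a < m" "b < m" "g < 3" "t < 5" "a' < m" "b' < m" "g' < 3" using d u v by auto
      have lt: "(s+1) mod 5 < 5" "(s+2) mod 5 < 5" by simp_all
      show False
        using KL[OF m dd ne lt pp] unfolding e by blast
    qed
  qed
  have notin: "replicate 5 (3*m) \<notin> ?f ` ?D"
  proof
    assume "replicate 5 (3*m) \<in> ?f ` ?D"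
    then obtain s a b g where "s < 5" "replicate 5 (3*m) = cw m s a b g" by auto
    moreover have "replicate 5 (3*m) ! ((s+1) mod 5) = 3 * m" by simp
    ultimately have "cw m s a b g ! ((s+1) mod 5) = 3 * m" by simp
    moreover have "(s+1) mod 5 \<noteq> s" by presburger
    ultimately show False using cw_inf[OF m0, of "(s+1) mod 5" s a b g] by auto
  qed
  have finD: "finite ?D" by simp
  have "card (code m) = Suc (card (?f ` ?D))"
    unfolding code_def by (rule card_insert_disjoint[OF finite_imageI[OF finD] notin])
  also have "card (?f ` ?D) = card ?D" using card_image[OF inj] .
  also have "card ?D = 5 * (m * (m * 3))" by (simp add: card_cartesian_product)
  finally show ?thesis by simp
qed

lemma code_words:
  assumes m: "odd m" and x: "x \<in> code m"
  shows "x \<in> words {..<3*m+1} 5"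
proof -
  have m0: "m > 0" using m by (cases m) auto
  have "length x = 5 \<and> (\<forall>p<5. x ! p < 3*m+1)"
  proof (cases "x = replicate 5 (3*m)")
    case True then show ?thesis by simp
  next
    case False
    then obtain s a b g where xx: "x = cw m s a b g" using x by (metis code_cases)
    show ?thesis using sym_lt[OF m0] by (simp add: xx cw_nth less_Suc_eq)
  qed
  then show ?thesis unfolding words_def by (auto simp: in_set_conv_nth)
qed

theorem theorem3:
  fixes q :: nat
  assumes "q mod 6 = 4"
  shows "\<exists>(F :: nat set) (C :: nat list set). finite F \<and> card F = q \<and> frameproof 3 F 5 C \<and>
           real (card C) = 5 / 3 * (real q - 1)^2 + 1"
proof -
  define k where "k = q div 6"
  have qk: "q = 6 * k + 4" using assms div_mult_mod_eq[of q 6] unfolding k_def by linarith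
  define m where "m = 2 * k + 1"
  have m: "odd m" unfolding m_def by simp
  have q: "q = 3 * m + 1" unfolding m_def qk by simp
  have fin: "finite (code m)" using code_card[OF m] card.infinite by fastforce
  have fp: "frameproof 3 {..<3*m+1} 5 (code m)"
    unfolding frameproof_def
  proof (intro conjI allI impI)
    show "code m \<subseteq> words {..<3*m+1} 5" using code_words[OF m] by blast
  next
    fix P assume P: "P \<subseteq> code m \<and> card P \<le> 3"
    have finP: "finite P" using P fin finite_subset by blast
    show "desc {..<3*m+1} 5 P \<inter> code m = P"
    proof
      show "P \<subseteq> desc {..<3*m+1} 5 P \<inter> code m"
      proof
        fix y assume y: "y \<in> P"
        then have yc: "y \<in> code m" using P by blast
        have "y \<in> words {..<3*m+1} 5" by (rule code_words[OF m yc])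
        moreover have "\<forall>i<5. \<exists>z\<in>P. y ! i = z ! i" using y by blast
        ultimately show "y \<in> desc {..<3*m+1} 5 P \<inter> code m" unfolding desc_def using yc by simp
      qed
    next
      show "desc {..<3*m+1} 5 P \<inter> code m \<subseteq> P"
      proof
        fix x assume x: "x \<in> desc {..<3*m+1} 5 P \<inter> code m"
        show "x \<in> P"
        proof (rule ccontr)
          assume xP: "x \<notin> P"
          have xc: "x \<in> code m" using x by blast
          obtain s where s: "s < 5" and
            kk: "\<forall>y\<in>code m. y \<noteq> x \<longrightarrow> (\<forall>i j. i < 5 \<longrightarrow> j < 5 \<longrightarrow> i \<noteq> j \<longrightarrow> i \<noteq> s \<longrightarrow> j \<noteq> s
                  \<longrightarrow> x ! i = y ! i \<longrightarrow> x ! j = y ! j \<longrightarrow> False)" using key[OF m xc] by blast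
          have cov: "\<forall>i<5. \<exists>y\<in>P. x ! i = y ! i" using x unfolding desc_def by auto
          define h where "h i = (SOME y. y \<in> P \<and> x ! i = y ! i)" for i
          have h: "h i \<in> P \<and> x ! i = h i ! i" if "i < 5" for i
          proof -
            from cov that obtain y where "y \<in> P \<and> x ! i = y ! i" by blast
            then show ?thesis unfolding h_def by (rule someI)
          qed
          have inj: "inj_on h ({..<5} - {s})"
          proof (rule inj_onI)
            fix i j assume ij: "i \<in> {..<5} - {s}" "j \<in> {..<5} - {s}" "h i = h j"
            show "i = j"
            proof (rule ccontr)
              assume "i \<noteq> j"
              moreover have "h i \<in> code m" "h i \<noteq> x" using h[of i] ij P xP by auto
              moreover have "i < 5" "j < 5" "i \<noteq> s" "j \<noteq> s" using ij by auto
              moreover have "x ! i = h i ! i" "x ! j = h i ! j" using h[of i] h[of j] ij by auto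
              ultimately show False using kk[rule_format] by blast
            qed
          qed
          have "h ` ({..<5} - {s}) \<subseteq> P" using h by auto
          then have "card ({..<5::nat} - {s}) \<le> card P"
            by (rule card_inj_on_le[OF inj _ finP])
          moreover have "card ({..<5::nat} - {s}) = 4" using s by simp
          ultimately show False using P by simp
        qed
      qed
    qed
  qed
  show ?thesis
  proof (intro exI conjI)
    show "finite {..<3*m+1}" by simp
    show "card {..<3*m+1} = q" using q by simp
    show "frameproof 3 {..<3*m+1} 5 (code m)" by (rule fp)
    have "real (card (code m)) = 15 * real m * real m + 1" using code_card[OF m] by simp
    also have "\<dots> = 5 / 3 * (real q - 1)^2 + 1" using q by (simp add: power2_eq_square algebra_simps)
    finally show "real (card (code m)) = 5 / 3 * (real q - 1)^2 + 1" .
  qed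
qed

end
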